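(* Let $\mathbb{F}_q$ be a finite field and let $s,t\ge1$ be coprime integers. Then the linear code $C=\bigoplus_{i=1}^{s}\mathrm{Rep}_t(\mathbb{F}_q)\le\mathbb{F}_q^{st}$ is a cyclic group code.
   Context: $\mathrm{Rep}_t(\mathbb{F}_q)=\{(\lambda,\dots,\lambda):\lambda\in\mathbb{F}_q\}\le\mathbb{F}_q^t$ is the repetition code; the direct sum consists of concatenations of $s$ constant blocks of length $t$. Let $\mathcal{B}=\{e_1,\dots,e_n\}$ be the standard basis of $\mathbb{F}_q^n$. For a finite group $H$ of order $n$, a linear code $C\le\mathbb{F}_q^n$ is an $H$-code if there exists a bijection $\phi:\mathcal{B}\to H$ whose $\mathbb{F}_q$-linear extension $\tilde\phi:\mathbb{F}_q^n\to\mathbb{F}_q[H]$ maps $C$ onto a two-sided ideal of $\mathbb{F}_q[H]$. $C$ is a cyclic group code if it is an $H$-code for some cyclic group $H$. *)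

theory Defs
  imports "HOL-Algebra.Elementary_Groups"
begin

text \<open>Vectors of F_q^n are modelled as functions nat => 'a (coordinate i is
  the coefficient of the basis vector e_(i+1), i < n); the standard basis is
  indexed by {0..<n}.\<close>

definition rep_code :: "nat \<Rightarrow> (nat \<Rightarrow> 'a::field) set" where
  "rep_code t = {v. \<exists>c. (\<forall>i<t. v i = c) \<and> (\<forall>i\<ge>t. v i = 0)}"

text \<open>Direct sum of s copies of Rep_t: concatenations of s blocks of length t,
  block k occupying coordinates k*t, ..., k*t+t-1.\<close>
definition rep_sum_code :: "nat \<Rightarrow> nat \<Rightarrow> (nat \<Rightarrow> 'a::field) set" where
  "rep_sum_code s t = {v. (\<forall>i\<ge>s*t. v i = 0) \<and>
      (\<forall>k<s. (\<lambda>j. if j < t then v (k*t + j) else 0) \<in> rep_code t)}"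

definition group_alg :: "('g, 'b) monoid_scheme \<Rightarrow> ('g \<Rightarrow> 'a::field) set" where
  "group_alg H = {a. \<forall>g. g \<notin> carrier H \<longrightarrow> a g = 0}"

definition group_alg_mult ::
  "('g, 'b) monoid_scheme \<Rightarrow> ('g \<Rightarrow> 'a::field) \<Rightarrow> ('g \<Rightarrow> 'a) \<Rightarrow> ('g \<Rightarrow> 'a)" where
  "group_alg_mult H a b = (\<lambda>g. if g \<in> carrier H then
      (\<Sum>h\<in>carrier H. a h * b (inv\<^bsub>H\<^esub> h \<otimes>\<^bsub>H\<^esub> g)) else 0)"

definition two_sided_ideal :: "('g, 'b) monoid_scheme \<Rightarrow> ('g \<Rightarrow> 'a::field) set \<Rightarrow> bool" where
  "two_sided_ideal H I \<longleftrightarrow> I \<subseteq> group_alg H \<and> (\<lambda>_. 0) \<in> I \<and>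
     (\<forall>x\<in>I. \<forall>y\<in>I. (\<lambda>g. x g + y g) \<in> I) \<and> (\<forall>x\<in>I. (\<lambda>g. - x g) \<in> I) \<and>
     (\<forall>a\<in>group_alg H. \<forall>x\<in>I. group_alg_mult H a x \<in> I \<and> group_alg_mult H x a \<in> I)"

text \<open>Linear extension of phi : {e_1..e_n} -> H to F^n -> F[H]:
  v = sum v_i e_i is mapped to sum v_i phi(e_i).\<close>
definition lin_ext :: "nat \<Rightarrow> (nat \<Rightarrow> 'g) \<Rightarrow> (nat \<Rightarrow> 'a::field) \<Rightarrow> ('g \<Rightarrow> 'a)" where
  "lin_ext n \<phi> v = (\<lambda>g. \<Sum>i\<in>{0..<n}. if \<phi> i = g then v i else 0)"

definition is_H_code :: "('g, 'b) monoid_scheme \<Rightarrow> nat \<Rightarrow> (nat \<Rightarrow> 'a::field) set \<Rightarrow> bool" where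
  "is_H_code H n C \<longleftrightarrow> group H \<and> finite (carrier H) \<and> card (carrier H) = n \<and>
     (\<exists>\<phi>. bij_betw \<phi> {0..<n} (carrier H) \<and> two_sided_ideal H (lin_ext n \<phi> ` C))"

text \<open>Cyclic group code (group elements realised in type nat; every finite
  group is isomorphic to one with carrier in nat).\<close>
definition is_cyclic_group_code :: "nat \<Rightarrow> (nat \<Rightarrow> 'a::field) set \<Rightarrow> bool" where
  "is_cyclic_group_code n C \<longleftrightarrow>
     (\<exists>H :: nat monoid. cyclic_group H \<and> is_H_code H n C)"

end

theory Submission
  imports Defs
begin

definition zmod :: "nat \<Rightarrow> nat monoid" where
  "zmod n = \<lparr>carrier = {0..<n}, monoid.mult = (\<lambda>a b. (a + b) mod n), one = 0\<rparr>"

lemma zmod_group: assumes "n \<ge> 1" shows "group (zmod n)"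
proof (rule groupI)
  fix x assume x: "x \<in> carrier (zmod n)"
  show "\<exists>y\<in>carrier (zmod n). y \<otimes>\<^bsub>zmod n\<^esub> x = \<one>\<^bsub>zmod n\<^esub>"
    using x assms by (intro bexI[of _ "(n - x) mod n"]) (auto simp: zmod_def mod_add_left_eq)
qed (use assms in \<open>auto simp: zmod_def mod_add_left_eq mod_add_right_eq add.assoc\<close>)

lemma zmod_comm: assumes "n \<ge> 1" shows "comm_group (zmod n)"
proof -
  interpret group "zmod n" using zmod_group[OF assms] .
  show ?thesis
    by (rule group_comm_groupI) (auto simp: zmod_def add.commute)
qed

lemma zmod_cyclic: assumes "n \<ge> 1" shows "cyclic_group (zmod n)"
proof -
  interpret I: group integer_group by (rule group_integer_group)
  define h where "h = (\<lambda>k::int. nat (k mod int n))"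
  have "h \<in> epi integer_group (zmod n)"
  proof -
    have hom: "h \<in> hom integer_group (zmod n)"
    proof (rule homI)
      fix a b :: int
      show "h a \<in> carrier (zmod n)" using assms
        by (auto simp: h_def zmod_def nat_less_iff)
      have "int (h (a + b)) = int ((h a + h b) mod n)" using assms
        by (simp add: h_def zmod_def of_nat_mod mod_add_eq)
      then show "h (a \<otimes>\<^bsub>integer_group\<^esub> b) = h a \<otimes>\<^bsub>zmod n\<^esub> h b"
        by (simp add: zmod_def integer_group_def)
    qed
    have "h ` UNIV = {0..<n}"
    proof
      show "h ` UNIV \<subseteq> {0..<n}" using assms by (auto simp: h_def nat_less_iff)
      show "{0..<n} \<subseteq> h ` UNIV"
      proof
        fix x assume "x \<in> {0..<n}"
        then have "h (int x) = x" by (simp add: h_def flip: of_nat_mod)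
        then show "x \<in> h ` UNIV" by (metis rangeI)
      qed
    qed
    then show ?thesis using hom by (simp add: epi_def zmod_def integer_group_def)
  qed
  then show ?thesis
    using I.cyclic_group_epimorphic_image[of h "zmod n"] zmod_group[OF assms] by simp
qed

lemma ga_comm:
  fixes H (structure)
  assumes "comm_group H" "finite (carrier H)"
  shows "group_alg_mult H a b = group_alg_mult H b a"
proof -
  interpret comm_group H by fact
  have "(\<Sum>h\<in>carrier H. a h * b (inv h \<otimes> g)) = (\<Sum>h\<in>carrier H. b h * a (inv h \<otimes> g))"
    if g: "g \<in> carrier H" for g
  proof -
    have ii: "inv (inv k \<otimes> g) \<otimes> g = k" if k: "k \<in> carrier H" for k
    proof -
      have "inv (inv k \<otimes> g) = inv (g \<otimes> inv k)" using k g by (simp add: m_comm)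
      also have "\<dots> = k \<otimes> inv g" using k g by (simp add: inv_mult_group)
      finally show ?thesis using k g by (simp add: m_assoc)
    qed
    have bij: "bij_betw (\<lambda>k. inv k \<otimes> g) (carrier H) (carrier H)"
      by (rule bij_betwI[where g="\<lambda>k. inv k \<otimes> g"]) (use g ii in auto)
    have "(\<Sum>h\<in>carrier H. a h * b (inv h \<otimes> g)) =
          (\<Sum>k\<in>carrier H. a (inv k \<otimes> g) * b (inv (inv k \<otimes> g) \<otimes> g))"
      by (rule sum.reindex_bij_betw[OF bij, symmetric])
    also have "\<dots> = (\<Sum>k\<in>carrier H. b k * a (inv k \<otimes> g))"
    proof (rule sum.cong)
      fix k assume k: "k \<in> carrier H"
      have "inv (inv k \<otimes> g) = inv (g \<otimes> inv k)" using k g by (simp add: m_comm)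
      also have "\<dots> = k \<otimes> inv g" using k g by (simp add: inv_mult_group)
      finally have "inv (inv k \<otimes> g) \<otimes> g = k" using k g
        by (simp add: m_assoc)
      then show "a (inv k \<otimes> g) * b (inv (inv k \<otimes> g) \<otimes> g) = b k * a (inv k \<otimes> g)"
        by (simp add: mult.commute)
    qed simp
    finally show ?thesis .
  qed
  then show ?thesis by (auto simp: group_alg_mult_def)
qed

theorem corollary2p1:
  fixes s t :: nat
  assumes "s \<ge> 1" and "t \<ge> 1" and "coprime s t"
  shows "is_cyclic_group_code (s * t) (rep_sum_code s t :: (nat \<Rightarrow> 'a::{field,finite}) set)"
proof -
  define n where "n = s * t"
  have n1: "n \<ge> 1" using assms by (simp add: n_def)
  define H where "H = zmod n"
  interpret comm_group H unfolding H_def by (rule zmod_comm[OF n1])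
  have carr: "carrier H = {0..<n}" by (simp add: H_def zmod_def)
  have mulH: "x \<otimes>\<^bsub>H\<^esub> y = (x + y) mod n" for x y by (simp add: H_def zmod_def)
  define \<phi> where "\<phi> i = i div t + s * (i mod t)" for i
  define \<psi> where "\<psi> g = (g mod s) * t + g div s" for g
  have phi_lt: "\<phi> i < n" and psi_phi: "\<psi> (\<phi> i) = i" if "i < n" for i
  proof -
    have a: "i div t < s" using that assms by (simp add: n_def less_mult_imp_div_less)
    have b: "i mod t < t" using assms by simp
    have "\<phi> i \<le> (s - 1) + s * (t - 1)" unfolding \<phi>_def using a b
      by (intro add_mono) auto
    also have "\<dots> < n" using assms by (simp add: n_def algebra_simps)
    finally show "\<phi> i < n" .
    have "\<phi> i mod s = i div t" "\<phi> i div s = i mod t" using a assms by (auto simp: \<phi>_def)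
    then show "\<psi> (\<phi> i) = i" by (simp add: \<psi>_def)
  qed
  have psi_lt: "\<psi> g < n" and phi_psi: "\<phi> (\<psi> g) = g" if "g < n" for g
  proof -
    have a: "g div s < t" using that assms by (simp add: n_def less_mult_imp_div_less mult.commute)
    have b: "g mod s < s" using assms by simp
    have "\<psi> g \<le> (s - 1) * t + (t - 1)" unfolding \<psi>_def using a b
      by (intro add_mono) auto
    also have "\<dots> < n" using assms by (simp add: n_def algebra_simps)
    finally show "\<psi> g < n" .
    have "\<psi> g div t = g mod s" "\<psi> g mod t = g div s" using a assms by (auto simp: \<psi>_def)
    then show "\<phi> (\<psi> g) = g" by (simp add: \<phi>_def)
  qed
  have bij: "bij_betw \<phi> {0..<n} (carrier H)"
    unfolding carr by (rule bij_betwI[where g=\<psi>]) (auto simp: phi_lt psi_lt psi_phi phi_psi)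
  have lin: "lin_ext n \<phi> v = (\<lambda>g. if g < n then v (\<psi> g) else 0)" for v :: "nat \<Rightarrow> 'a"
  proof
    fix g
    show "lin_ext n \<phi> v g = (if g < n then v (\<psi> g) else 0)"
    proof (cases "g < n")
      case True
      have eq: "(\<phi> i = g) = (i = \<psi> g)" if "i < n" for i
        using that True phi_psi psi_phi by metis
      have "lin_ext n \<phi> v g = (\<Sum>i\<in>{0..<n}. if i = \<psi> g then v i else 0)"
        unfolding lin_ext_def
        by (rule sum.cong) (auto simp: eq)
      then show ?thesis using True psi_lt by simp
    next
      case False
      have "\<phi> i \<noteq> g" if "i < n" for i using phi_lt[OF that] False by simp
      then show ?thesis unfolding lin_ext_def using False
        by (auto intro!: sum.neutral)
    qed
  qed
  have lin': "lin_ext n \<phi> v g = (if g < n then v (\<psi> g) else 0)" for v :: "nat \<Rightarrow> 'a" and g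
    by (simp add: lin)
  define I :: "(nat \<Rightarrow> 'a) set" where
    "I = {f. (\<forall>g. g \<ge> n \<longrightarrow> f g = 0) \<and> (\<forall>g<n. f g = f (g mod s))}"
  have blk: "v (k * t + j) = v (k * t)" if v: "v \<in> rep_sum_code s t" and k: "k < s" and j: "j < t"
    for v :: "nat \<Rightarrow> 'a" and k j
  proof -
    have "\<exists>c. \<forall>i<t. v (k * t + i) = c" using v k by (simp add: rep_sum_code_def rep_code_def)
    then obtain c where c: "\<forall>i<t. (if i < t then v (k * t + i) else 0) = c" by auto
    have "v (k * t + j) = c" using c j by auto
    moreover have "v (k * t + 0) = c" using c assms(2) by (metis less_le_trans zero_less_one)
    ultimately show ?thesis by simp
  qed
  have Imod: "f g = f (g mod s)" if "f \<in> I" "g < n" for f g using that by (simp add: I_def)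
  have Izero: "f g = 0" if "f \<in> I" "n \<le> g" for f g using that by (simp add: I_def)
  have Iintro: "f \<in> I" if "\<And>g. n \<le> g \<Longrightarrow> f g = 0" "\<And>g. g < n \<Longrightarrow> f g = f (g mod s)" for f
    using that unfolding I_def by blast
  have img: "lin_ext n \<phi> ` rep_sum_code s t = I"
  proof
    show "lin_ext n \<phi> ` rep_sum_code s t \<subseteq> I"
    proof
      fix f :: "nat \<Rightarrow> 'a" assume "f \<in> lin_ext n \<phi> ` rep_sum_code s t"
      then obtain v where v: "v \<in> rep_sum_code s t" and f: "f = lin_ext n \<phi> v" by blast
      have fm: "f g = f (g mod s)" if g: "g < n" for g
      proof -
        have gs: "g mod s < n" using g by (meson le_less_trans mod_less_eq_dividend)
        have ms: "g mod s < s" using assms(1) by simp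
        have dt: "g div s < t" using g assms by (simp add: n_def less_mult_imp_div_less mult.commute)
        have "f g = v ((g mod s) * t + g div s)" using g lin'[of v g] by (simp add: f \<psi>_def)
        also have "\<dots> = v ((g mod s) * t)" by (rule blk[OF v ms dt])
        also have "\<dots> = f (g mod s)" using gs lin'[of v "g mod s"] by (simp add: f \<psi>_def)
        finally show ?thesis .
      qed
      have "f g = 0" if "n \<le> g" for g using that by (simp add: f lin')
      with fm show "f \<in> I" unfolding I_def by blast
    qed
    show "I \<subseteq> lin_ext n \<phi> ` rep_sum_code s t"
    proof
      fix f assume f: "f \<in> I"
      define v where "v i = (if i < n then f (\<phi> i) else 0)" for i
      have "v \<in> rep_sum_code s t"
        unfolding rep_sum_code_def rep_code_def
      proof (intro CollectI conjI allI impI)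
        fix i assume "s * t \<le> i" then show "v i = 0" by (simp add: v_def n_def)
      next
        fix k assume k: "k < s"
        have "v (k * t + j) = f k" if j: "j < t" for j
        proof -
          have lt: "k * t + j < n"
          proof -
            have "k * t + j < k * t + t" using j by simp
            also have "\<dots> = (k + 1) * t" by simp
            also have "\<dots> \<le> s * t" using k by (intro mult_right_mono) auto
            finally show ?thesis by (simp add: n_def)
          qed
          have "\<phi> (k * t + j) = k + s * j" using j by (simp add: \<phi>_def)
          moreover have "k + s * j < n" using phi_lt[OF lt] calculation by simp
          moreover have "(k + s * j) mod s = k" using k by simp
          ultimately show ?thesis using Imod[OF f \<open>k + s * j < n\<close>] lt by (simp add: v_def)
        qed
        then show "\<exists>c. (\<forall>i<t. (\<lambda>j. if j < t then v (k * t + j) else 0) i = c) \<and>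
               (\<forall>i\<ge>t. (\<lambda>j. if j < t then v (k * t + j) else 0) i = 0)"
          by (intro exI[of _ "f k"]) auto
      qed
      moreover have "lin_ext n \<phi> v = f"
      proof
        fix g show "lin_ext n \<phi> v g = f g"
          using Izero[OF f, of g] by (auto simp: lin' v_def psi_lt phi_psi)
      qed
      ultimately show "f \<in> lin_ext n \<phi> ` rep_sum_code s t" by (metis image_eqI)
    qed
  qed
  have sdvd: "s dvd n" by (simp add: n_def)
  have left: "group_alg_mult H a x \<in> I" if x: "x \<in> I" for a x :: "nat \<Rightarrow> 'a"
  proof -
    have "group_alg_mult H a x g = group_alg_mult H a x (g mod s)" if g: "g < n" for g
    proof -
      have gs: "g mod s < n" using g by (meson le_less_trans mod_less_eq_dividend)
      have "(\<Sum>h\<in>carrier H. a h * x (inv\<^bsub>H\<^esub> h \<otimes>\<^bsub>H\<^esub> g)) =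
            (\<Sum>h\<in>carrier H. a h * x (inv\<^bsub>H\<^esub> h \<otimes>\<^bsub>H\<^esub> (g mod s)))"
      proof (rule sum.cong)
        fix h assume h: "h \<in> carrier H"
        define u where "u = inv\<^bsub>H\<^esub> h"
        have u: "u < n" using h carr unfolding u_def by (metis atLeastLessThan_iff inv_closed)
        have "x ((u + g) mod n) = x ((u + g) mod n mod s)"
          by (rule Imod[OF x]) (use n1 in simp)
        also have "(u + g) mod n mod s = (u + g mod s) mod n mod s"
          using sdvd by (simp add: mod_mod_cancel mod_add_right_eq)
        also have "x \<dots> = x ((u + g mod s) mod n)"
          by (rule Imod[OF x, symmetric]) (use n1 in simp)
        finally show "a h * x (inv\<^bsub>H\<^esub> h \<otimes>\<^bsub>H\<^esub> g) = a h * x (inv\<^bsub>H\<^esub> h \<otimes>\<^bsub>H\<^esub> (g mod s))"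
          by (simp add: mulH u_def)
      qed simp
      then show ?thesis using g gs by (simp add: group_alg_mult_def carr)
    qed
    then show ?thesis by (intro Iintro) (auto simp: group_alg_mult_def carr)
  qed
  have ideal: "two_sided_ideal H I"
    unfolding two_sided_ideal_def
  proof (intro conjI ballI)
    show "I \<subseteq> group_alg H" using Izero by (auto simp: group_alg_def carr)
  next
    fix a x :: "nat \<Rightarrow> 'a" assume "a \<in> group_alg H" "x \<in> I"
    then have l: "group_alg_mult H a x \<in> I" using left by blast
    have fin: "finite (carrier H)" by (simp add: carr)
    show "group_alg_mult H a x \<in> I" by (rule l)
    show "group_alg_mult H x a \<in> I" using l ga_comm[OF comm_group_axioms fin, of x a] by simp
  next
    show "(\<lambda>_. 0) \<in> I" by (rule Iintro) auto
  next
    fix x y assume x: "x \<in> I" and y: "y \<in> I"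
    show "(\<lambda>g. x g + y g) \<in> I"
      by (rule Iintro) (use Izero[OF x] Izero[OF y] Imod[OF x] Imod[OF y] in auto)
  next
    fix x assume x: "x \<in> I"
    show "(\<lambda>g. - x g) \<in> I"
      by (rule Iintro) (use Izero[OF x] Imod[OF x] in auto)
  qed
  show ?thesis
    unfolding is_cyclic_group_code_def is_H_code_def n_def[symmetric]
    using zmod_cyclic[OF n1] zmod_group[OF n1] bij img ideal
    by (auto simp: H_def carr intro!: exI[of _ "zmod n"] exI[of _ \<phi>] simp flip: H_def)
qed

end
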